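(* Let $m\ge3$, $C$ a set of $m$ candidates, $T$ the set of all $m!$ strict rankings of $C$, $w=(w_1,\dots,w_m)$ with $1=w_1\ge\cdots\ge w_m=0$, and $\sigma_t(\alpha)=w_i$ where $i$ is the position of $\alpha$ in $t\in T$. Let $(N_t)_{t\in T}$ be nonnegative integers (numbers of voters of each type) and $|\alpha|=\sum_tN_t\sigma_t(\alpha)$. Suppose candidate $a$ satisfies $|a|>|\alpha|$ for all $\alpha\ne a$, and let $b$ be a candidate with the second-highest score, i.e. $|b|\ge|\alpha|$ for all $\alpha\ne a$. For $\beta\ne a$ let $Q_3(\beta)$ be the optimal value (or $+\infty$ if infeasible) of the linear program: minimize $\sum_{t\in\bar T_{\beta a}}x_t$ over real $x_t$ ($t\in\bar T_{\beta a}$), $y_t$ ($t\in T_\beta$) subject to $$\sum_{t\in T_\beta}y_t(1-\sigma_t(\alpha))-\sum_{t\in\bar T_{\beta a}}x_t(\sigma_t(\beta)-\sigma_t(\alpha))\ge|\alpha|-|\beta|\quad\forall\alpha\ne\beta,$$ $\sum_{t\in T_\beta}y_t=\sum_{t\in\bar T_{\beta a}}x_t$, $x_t\ge0$, $y_t\ge0$, where $\bar T_{\beta a}$ is the set of types ranking $\beta$ above $a$ and $T_\beta$ the set of types ranking $\beta$ first. Then $\min_{\beta\ne a}Q_3(\beta)=Q_3(b)$. *)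

theory Defs
  imports "HOL-Analysis.Analysis" "HOL-Library.Extended_Real"
begin

text \<open>Candidates form a finite type 'c with m = CARD('c). A strict ranking t
is encoded by its position function: t c is the position (1 = top) of c.\<close>

definition rankings :: "('c::finite \<Rightarrow> nat) set" where
  "rankings = {t. bij_betw t UNIV {1..CARD('c)}}"

definition sigma :: "(nat \<Rightarrow> real) \<Rightarrow> ('c::finite \<Rightarrow> nat) \<Rightarrow> 'c \<Rightarrow> real" where
  "sigma w t \<alpha> = w (t \<alpha>)"

definition score :: "(nat \<Rightarrow> real) \<Rightarrow> (('c::finite \<Rightarrow> nat) \<Rightarrow> nat) \<Rightarrow> 'c \<Rightarrow> real" where
  "score w N \<alpha> = (\<Sum>t\<in>rankings. real (N t) * sigma w t \<alpha>)"

definition above :: "'c::finite \<Rightarrow> 'c \<Rightarrow> ('c \<Rightarrow> nat) set" where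
  "above \<beta> a = {t\<in>rankings. t \<beta> < t a}"

definition first :: "'c::finite \<Rightarrow> ('c \<Rightarrow> nat) set" where
  "first \<beta> = {t\<in>rankings. t \<beta> = 1}"

definition Q3 :: "(nat \<Rightarrow> real) \<Rightarrow> (('c::finite \<Rightarrow> nat) \<Rightarrow> nat) \<Rightarrow> 'c \<Rightarrow> 'c \<Rightarrow> ereal" where
  "Q3 w N a \<beta> = Inf {ereal (\<Sum>t\<in>above \<beta> a. x t) | x y.
      (\<forall>\<alpha>. \<alpha> \<noteq> \<beta> \<longrightarrow>
         (\<Sum>t\<in>first \<beta>. y t * (1 - sigma w t \<alpha>))
         - (\<Sum>t\<in>above \<beta> a. x t * (sigma w t \<beta> - sigma w t \<alpha>))
         \<ge> score w N \<alpha> - score w N \<beta>)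
    \<and> (\<Sum>t\<in>first \<beta>. y t) = (\<Sum>t\<in>above \<beta> a. x t)
    \<and> (\<forall>t\<in>above \<beta> a. x t \<ge> 0)
    \<and> (\<forall>t\<in>first \<beta>. y t \<ge> 0)}"

end

theory Submission
  imports Defs
begin

lemma Q3_mono:
  fixes w :: "nat \<Rightarrow> real" and N :: "('c::finite \<Rightarrow> nat) \<Rightarrow> nat" and a b \<beta> :: 'c
  assumes ba: "b \<noteq> a" and bea: "\<beta> \<noteq> a" and sc: "score w N \<beta> \<le> score w N b"
  shows "Q3 w N a b \<le> Q3 w N a \<beta>"
proof -
  define p where "p c = (if c = \<beta> then b else if c = b then \<beta> else c)" for c
  have pp: "p (p c) = c" for c by (auto simp: p_def)
  have pb: "p b = \<beta>" and pa: "p a = a" using ba bea by (auto simp: p_def)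
  have bijp: "bij p" by (metis bijI' pp)
  define g where "g t = t \<circ> p" for t :: "'c \<Rightarrow> nat"
  have gg: "g (g t) = t" for t by (auto simp: g_def pp fun_eq_iff)
  have grank: "t \<in> rankings \<Longrightarrow> g t \<in> rankings" for t
    unfolding rankings_def g_def using bijp
    by (auto intro: bij_betw_trans)
  have gapp: "g t c = t (p c)" for t c by (simp add: g_def)
  have pbe: "p \<beta> = b" by (simp add: p_def)
  have gab: "bij_betw g (above b a) (above \<beta> a)"
    by (rule bij_betw_byWitness[where f'=g]) (auto simp: gg above_def gapp pb pa pbe grank)
  have gfi: "bij_betw g (first b) (first \<beta>)"
    by (rule bij_betw_byWitness[where f'=g]) (auto simp: gg first_def gapp pb pbe grank)
  let ?S = "\<lambda>\<beta>. {ereal (\<Sum>t\<in>above \<beta> a. x t) | x y.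
      (\<forall>\<alpha>. \<alpha> \<noteq> \<beta> \<longrightarrow>
         (\<Sum>t\<in>first \<beta>. y t * (1 - sigma w t \<alpha>))
         - (\<Sum>t\<in>above \<beta> a. x t * (sigma w t \<beta> - sigma w t \<alpha>))
         \<ge> score w N \<alpha> - score w N \<beta>)
    \<and> (\<Sum>t\<in>first \<beta>. y t) = (\<Sum>t\<in>above \<beta> a. x t)
    \<and> (\<forall>t\<in>above \<beta> a. x t \<ge> 0)
    \<and> (\<forall>t\<in>first \<beta>. y t \<ge> 0)}"
  have sub: "?S \<beta> \<subseteq> ?S b"
  proof
    fix v assume "v \<in> ?S \<beta>"
    then obtain x y where v: "v = ereal (\<Sum>t\<in>above \<beta> a. x t)"
      and c1: "\<forall>\<alpha>. \<alpha> \<noteq> \<beta> \<longrightarrow>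
         (\<Sum>t\<in>first \<beta>. y t * (1 - sigma w t \<alpha>))
         - (\<Sum>t\<in>above \<beta> a. x t * (sigma w t \<beta> - sigma w t \<alpha>))
         \<ge> score w N \<alpha> - score w N \<beta>"
      and c2: "(\<Sum>t\<in>first \<beta>. y t) = (\<Sum>t\<in>above \<beta> a. x t)"
      and c3: "\<forall>t\<in>above \<beta> a. x t \<ge> 0"
      and c4: "\<forall>t\<in>first \<beta>. y t \<ge> 0" by blast
    define x' where "x' t = x (g t)" for t
    define y' where "y' t = y (g t)" for t
    have sx: "(\<Sum>t\<in>above b a. h (g t)) = (\<Sum>t\<in>above \<beta> a. h t)" for h :: "_ \<Rightarrow> real"
      using sum.reindex_bij_betw[OF gab] .
    have sy: "(\<Sum>t\<in>first b. h (g t)) = (\<Sum>t\<in>first \<beta>. h t)" for h :: "_ \<Rightarrow> real"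
      using sum.reindex_bij_betw[OF gfi] .
    have sig: "sigma w (g t) c = sigma w t (p c)" for t c by (simp add: sigma_def g_def)
    have "v = ereal (\<Sum>t\<in>above b a. x' t)" using v sx[of x] by (simp add: x'_def)
    moreover have "\<forall>\<alpha>. \<alpha> \<noteq> b \<longrightarrow>
         (\<Sum>t\<in>first b. y' t * (1 - sigma w t \<alpha>))
         - (\<Sum>t\<in>above b a. x' t * (sigma w t b - sigma w t \<alpha>))
         \<ge> score w N \<alpha> - score w N b"
    proof (intro allI impI)
      fix \<alpha> assume ab: "\<alpha> \<noteq> b"
      have e1: "(\<Sum>t\<in>first b. y' t * (1 - sigma w t \<alpha>)) = (\<Sum>t\<in>first \<beta>. y t * (1 - sigma w t (p \<alpha>)))"
        using sy[of "\<lambda>t. y t * (1 - sigma w t (p \<alpha>))"] by (simp add: y'_def sig gg pp)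
      have e2: "(\<Sum>t\<in>above b a. x' t * (sigma w t b - sigma w t \<alpha>)) = (\<Sum>t\<in>above \<beta> a. x t * (sigma w t \<beta> - sigma w t (p \<alpha>)))"
        using sx[of "\<lambda>t. x t * (sigma w t \<beta> - sigma w t (p \<alpha>))"] by (simp add: x'_def sig gg pp pbe)
      have pab: "p \<alpha> \<noteq> \<beta>" using ab pp pb by metis
      have "score w N (p \<alpha>) - score w N \<beta> \<ge> score w N \<alpha> - score w N b"
        using sc ab by (auto simp: p_def)
      then show "(\<Sum>t\<in>first b. y' t * (1 - sigma w t \<alpha>))
         - (\<Sum>t\<in>above b a. x' t * (sigma w t b - sigma w t \<alpha>))
         \<ge> score w N \<alpha> - score w N b"
        using c1 pab e1 e2 by fastforce
    qed
    moreover have "(\<Sum>t\<in>first b. y' t) = (\<Sum>t\<in>above b a. x' t)"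
      using c2 sx[of x] sy[of y] by (simp add: x'_def y'_def)
    moreover have "\<forall>t\<in>above b a. x' t \<ge> 0"
      using c3 gab by (auto simp: x'_def bij_betw_def)
    moreover have "\<forall>t\<in>first b. y' t \<ge> 0"
      using c4 gfi by (auto simp: y'_def bij_betw_def)
    ultimately show "v \<in> ?S b" by blast
  qed
  then show ?thesis unfolding Q3_def by (rule Inf_superset_mono)
qed

theorem proposition7:
  fixes w :: "nat \<Rightarrow> real" and N :: "('c::finite \<Rightarrow> nat) \<Rightarrow> nat" and a b :: 'c
  assumes "CARD('c) \<ge> 3"
    and "w 1 = 1" and "w (CARD('c)) = 0"
    and "\<And>i j. 1 \<le> i \<Longrightarrow> i \<le> j \<Longrightarrow> j \<le> CARD('c) \<Longrightarrow> w j \<le> w i"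
    and "\<And>\<alpha>. \<alpha> \<noteq> a \<Longrightarrow> score w N a > score w N \<alpha>"
    and "b \<noteq> a"
    and "\<And>\<alpha>. \<alpha> \<noteq> a \<Longrightarrow> score w N b \<ge> score w N \<alpha>"
  shows "(INF \<beta>\<in>{\<beta>. \<beta> \<noteq> a}. Q3 w N a \<beta>) = Q3 w N a b"
proof (rule antisym)
  show "(INF \<beta>\<in>{\<beta>. \<beta> \<noteq> a}. Q3 w N a \<beta>) \<le> Q3 w N a b"
    using assms(6) by (intro INF_lower) simp
  show "Q3 w N a b \<le> (INF \<beta>\<in>{\<beta>. \<beta> \<noteq> a}. Q3 w N a \<beta>)"
    using assms(6,7) by (intro INF_greatest Q3_mono) auto
qed

end
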